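(* Let $\mathcal{A}$ be an uncountable almost disjoint family of infinite subsets of $\omega$ and let $\mathcal{I}$ be an ideal. The following are equivalent: (a) $\Phi(\mathcal{A})$ is in $\mathrm{FinBW}(\mathcal{I})$; (b) for every $f\in\mathcal{D}_{\mathcal{I}}$ there is $B\notin\mathcal{I}$ such that $f|B$ is finite-to-one and $f[B]\in\mathrm{Fin}^2(\mathcal{A})$.
   Context: An ideal on an infinite countable set $X$ is a family $\mathcal{I}\subseteq\mathcal{P}(X)$ closed under subsets and finite unions, containing all finite subsets, with $X\notin\mathcal{I}$. A space $X$ is in $\mathrm{FinBW}(\mathcal{I})$ if $X$ is Hausdorff and for every sequence $(x_n)_{n\in\bigcup\mathcal{I}}$ in $X$ there is $A\notin\mathcal{I}$ with $(x_n)_{n\in A}$ convergent in $X$. $\mathcal{D}_{\mathcal{I}}$ is the set of functions $f:\bigcup\mathcal{I}\to\omega$ with $f^{-1}[\{n\}]\in\mathcal{I}$ for all $n$. For an almost disjoint family $\mathcal{A}$ (infinite subsets of $\omega$ with pairwise finite intersections), $\mathrm{Fin}^2(\mathcal{A})$ is the ideal on $\omega$ generated by the members of $\mathcal{A}$ together with all sets having finite intersection with every member of $\mathcal{A}$. $\Phi(\mathcal{A})$ is the space on $\omega\cup\mathcal{A}\cup\{\infty\}$ with points of $\omega$ isolated, basic neighbourhoods of $A\in\mathcal{A}$ of the form $\{A\}\cup(A\setminus F)$ ($F\subseteq\omega$ finite) and of $\infty$ of the form $\{\infty\}\cup(\mathcal{A}\setminus G)\cup(\omega\setminus(F\cup\bigcup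 G))$ ($F\subseteq\omega$, $G\subseteq\mathcal{A}$ finite). *)

theory Defs
  imports "HOL-Analysis.Analysis"
begin

definition is_ideal :: "'a set set \<Rightarrow> bool" where
  "is_ideal I \<longleftrightarrow>
     countable (\<Union>I) \<and> infinite (\<Union>I) \<and>
     (\<forall>A\<in>I. \<forall>B. B \<subseteq> A \<longrightarrow> B \<in> I) \<and>
     (\<forall>A\<in>I. \<forall>B\<in>I. A \<union> B \<in> I) \<and>
     (\<forall>F. F \<subseteq> \<Union>I \<and> finite F \<longrightarrow> F \<in> I) \<and>
     \<Union>I \<notin> I"

definition conv_on :: "'b topology \<Rightarrow> ('a \<Rightarrow> 'b) \<Rightarrow> 'a set \<Rightarrow> 'b \<Rightarrow> bool" where
  "conv_on T x A l \<longleftrightarrow>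
     l \<in> topspace T \<and> (\<forall>U. openin T U \<and> l \<in> U \<longrightarrow> finite {n \<in> A. x n \<notin> U})"

definition FinBW :: "'a set set \<Rightarrow> 'b topology \<Rightarrow> bool" where
  "FinBW I T \<longleftrightarrow> Hausdorff_space T \<and>
     (\<forall>x. (\<forall>n\<in>\<Union>I. x n \<in> topspace T) \<longrightarrow>
        (\<exists>A. A \<subseteq> \<Union>I \<and> A \<notin> I \<and> (\<exists>l. conv_on T x A l)))"

definition D_ideal :: "'a set set \<Rightarrow> ('a \<Rightarrow> nat) set" where
  "D_ideal I = {f. \<forall>n. {x \<in> \<Union>I. f x = n} \<in> I}"

definition almost_disjoint :: "nat set set \<Rightarrow> bool" where
  "almost_disjoint \<A> \<longleftrightarrow> (\<forall>a\<in>\<A>. infinite a) \<and>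
     (\<forall>a\<in>\<A>. \<forall>b\<in>\<A>. a \<noteq> b \<longrightarrow> finite (a \<inter> b))"

text \<open>Fin^2(A): the ideal generated by A together with all sets having finite
  intersection with every member of A (the latter family is closed under finite
  unions, so the generated ideal has this form).\<close>
definition Fin2 :: "nat set set \<Rightarrow> nat set set" where
  "Fin2 \<A> = {S. \<exists>F T. F \<subseteq> \<A> \<and> finite F \<and> (\<forall>a\<in>\<A>. finite (T \<inter> a)) \<and>
                       S \<subseteq> \<Union>F \<union> T}"

datatype phi_pt = Pt nat | Ad "nat set" | Infty

definition phi_carrier :: "nat set set \<Rightarrow> phi_pt set" where
  "phi_carrier \<A> = range Pt \<union> Ad ` \<A> \<union> {Infty}"

definition phi_basic :: "nat set set \<Rightarrow> phi_pt \<Rightarrow> phi_pt set \<Rightarrow> bool" where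
  "phi_basic \<A> p N \<longleftrightarrow>
     (\<exists>n. p = Pt n \<and> N = {Pt n}) \<or>
     (\<exists>a F. a \<in> \<A> \<and> p = Ad a \<and> finite F \<and> N = {Ad a} \<union> Pt ` (a - F)) \<or>
     (\<exists>F G. p = Infty \<and> finite F \<and> finite G \<and> G \<subseteq> \<A> \<and>
        N = {Infty} \<union> Ad ` (\<A> - G) \<union> Pt ` (UNIV - (F \<union> \<Union>G)))"

definition Phi :: "nat set set \<Rightarrow> phi_pt topology" where
  "Phi \<A> = topology (\<lambda>U. U \<subseteq> phi_carrier \<A> \<and>
              (\<forall>p\<in>U. \<exists>N. phi_basic \<A> p N \<and> N \<subseteq> U))"

end

theory Submission
  imports Defs
begin
lemma basic_mem: "phi_basic \<A> p N \<Longrightarrow> p \<in> N" unfolding phi_basic_def by auto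
lemma basic_sub: "phi_basic \<A> p N \<Longrightarrow> N \<subseteq> phi_carrier \<A>"
  unfolding phi_basic_def phi_carrier_def by auto

lemma basic_Infty: "finite F \<Longrightarrow> finite G \<Longrightarrow> G \<subseteq> \<A> \<Longrightarrow>
  phi_basic \<A> Infty ({Infty} \<union> Ad ` (\<A> - G) \<union> Pt ` (UNIV - (F \<union> \<Union>G)))"
  unfolding phi_basic_def by (rule disjI2, rule disjI2, rule exI[of _ F], rule exI[of _ G]) simp
lemma basic_Ad: "a \<in> \<A> \<Longrightarrow> finite F \<Longrightarrow> phi_basic \<A> (Ad a) ({Ad a} \<union> Pt ` (a - F))"
  unfolding phi_basic_def by (rule disjI2, rule disjI1, rule exI[of _ a], rule exI[of _ F]) simp
lemma basic_Pt: "phi_basic \<A> (Pt n) {Pt n}"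
  unfolding phi_basic_def by simp
lemma basic_InftyE: "phi_basic \<A> Infty N \<Longrightarrow> \<exists>F G. finite F \<and> finite G \<and> G \<subseteq> \<A> \<and>
   N = {Infty} \<union> Ad ` (\<A> - G) \<union> Pt ` (UNIV - (F \<union> \<Union>G))"
  unfolding phi_basic_def by simp
lemma basic_AdE: "phi_basic \<A> (Ad a) N \<Longrightarrow> \<exists>F. finite F \<and> N = {Ad a} \<union> Pt ` (a - F)"
  unfolding phi_basic_def by simp

lemma basic_int:
  assumes "phi_basic \<A> p N1" "phi_basic \<A> p N2"
  shows "\<exists>N. phi_basic \<A> p N \<and> N \<subseteq> N1 \<inter> N2"
proof (cases p)
  case (Pt n) then show ?thesis using assms unfolding phi_basic_def by auto
next
  case (Ad a)
  then obtain F1 F2 where a: "a \<in> \<A>" "finite F1" "finite F2" "N1 = {Ad a} \<union> Pt ` (a - F1)"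
    "N2 = {Ad a} \<union> Pt ` (a - F2)"
    using assms unfolding phi_basic_def by auto
  then have "phi_basic \<A> p ({Ad a} \<union> Pt ` (a - (F1 \<union> F2)))" using Ad unfolding phi_basic_def by auto
  then show ?thesis using a by (intro exI[of _ "{Ad a} \<union> Pt ` (a - (F1 \<union> F2))"]) auto
next
  case Infty
  then obtain F1 F2 G1 G2 where a: "finite F1" "finite F2" "finite G1" "finite G2" "G1 \<subseteq> \<A>" "G2 \<subseteq> \<A>"
    "N1 = {Infty} \<union> Ad ` (\<A> - G1) \<union> Pt ` (UNIV - (F1 \<union> \<Union>G1))"
    "N2 = {Infty} \<union> Ad ` (\<A> - G2) \<union> Pt ` (UNIV - (F2 \<union> \<Union>G2))"
    using assms unfolding phi_basic_def by auto
  let ?N = "{Infty} \<union> Ad ` (\<A> - (G1 \<union> G2)) \<union> Pt ` (UNIV - ((F1 \<union> F2) \<union> \<Union>(G1 \<union> G2)))"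
  have "phi_basic \<A> p ?N" using Infty a unfolding phi_basic_def
    by (intro disjI2 exI[of _ "F1 \<union> F2"] exI[of _ "G1 \<union> G2"]) auto
  then show ?thesis using a by (intro exI[of _ ?N]) auto
qed

lemma phi_istop: "istopology (\<lambda>U. U \<subseteq> phi_carrier \<A> \<and> (\<forall>p\<in>U. \<exists>N. phi_basic \<A> p N \<and> N \<subseteq> U))"
  unfolding istopology_def
proof (rule conjI; intro allI impI)
  fix S T assume S: "S \<subseteq> phi_carrier \<A> \<and> (\<forall>p\<in>S. \<exists>N. phi_basic \<A> p N \<and> N \<subseteq> S)"
    and T: "T \<subseteq> phi_carrier \<A> \<and> (\<forall>p\<in>T. \<exists>N. phi_basic \<A> p N \<and> N \<subseteq> T)"
  show "S \<inter> T \<subseteq> phi_carrier \<A> \<and> (\<forall>p\<in>S \<inter> T. \<exists>N. phi_basic \<A> p N \<and> N \<subseteq> S \<inter> T)"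
  proof (intro conjI ballI)
    show "S \<inter> T \<subseteq> phi_carrier \<A>" using S by auto
    fix p assume "p \<in> S \<inter> T"
    then obtain N1 N2 where h: "phi_basic \<A> p N1" "N1 \<subseteq> S" "phi_basic \<A> p N2" "N2 \<subseteq> T"
      using S T by blast
    obtain N where "phi_basic \<A> p N" "N \<subseteq> N1 \<inter> N2" using basic_int[OF h(1) h(3)] by blast
    then show "\<exists>N. phi_basic \<A> p N \<and> N \<subseteq> S \<inter> T" using h(2,4) by blast
  qed
next
  fix K assume K: "\<forall>S\<in>K. S \<subseteq> phi_carrier \<A> \<and> (\<forall>p\<in>S. \<exists>N. phi_basic \<A> p N \<and> N \<subseteq> S)"
  show "\<Union>K \<subseteq> phi_carrier \<A> \<and> (\<forall>p\<in>\<Union>K. \<exists>N. phi_basic \<A> p N \<and> N \<subseteq> \<Union>K)"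
  proof (intro conjI ballI)
    show "\<Union>K \<subseteq> phi_carrier \<A>" using K by auto
    fix p assume "p \<in> \<Union>K"
    then obtain S where S: "S \<in> K" "p \<in> S" by blast
    then have "\<exists>N. phi_basic \<A> p N \<and> N \<subseteq> S" using K by blast
    then obtain N where "phi_basic \<A> p N" "N \<subseteq> S" by blast
    then show "\<exists>N. phi_basic \<A> p N \<and> N \<subseteq> \<Union>K" using S(1) by blast
  qed
qed

lemma openin_Phi: "openin (Phi \<A>) U \<longleftrightarrow> U \<subseteq> phi_carrier \<A> \<and> (\<forall>p\<in>U. \<exists>N. phi_basic \<A> p N \<and> N \<subseteq> U)"
  unfolding Phi_def using phi_istop by simp

lemma basic_exists: "p \<in> phi_carrier \<A> \<Longrightarrow> \<exists>N. phi_basic \<A> p N"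
proof -
  assume p: "p \<in> phi_carrier \<A>"
  show ?thesis
  proof (cases p)
    case (Pt n)
    then have "phi_basic \<A> p {Pt n}" by (simp add: phi_basic_def)
    then show ?thesis by blast
  next
    case (Ad a)
    then have "a \<in> \<A>" using p unfolding phi_carrier_def by auto
    then have "phi_basic \<A> p ({Ad a} \<union> Pt ` (a - {}))" using Ad unfolding phi_basic_def by auto
    then show ?thesis by blast
  next
    case Infty
    have "phi_basic \<A> p ({Infty} \<union> Ad ` (\<A> - {}) \<union> Pt ` (UNIV - ({} \<union> \<Union>{})))"
      unfolding phi_basic_def
      by (rule disjI2, rule disjI2, rule exI[of _ "{}::nat set"], rule exI[of _ "{}::nat set set"]) (simp add: Infty)
    then show ?thesis by blast
  qed
qed

lemma topspace_Phi: "topspace (Phi \<A>) = phi_carrier \<A>"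
proof -
  have "openin (Phi \<A>) (phi_carrier \<A>)" unfolding openin_Phi using basic_exists basic_sub by blast
  then show ?thesis unfolding topspace_def using openin_Phi by blast
qed

lemma basic_open:
  assumes ad: "almost_disjoint \<A>" and b: "phi_basic \<A> p N"
  shows "openin (Phi \<A>) N"
  unfolding openin_Phi
proof (intro conjI ballI)
  show "N \<subseteq> phi_carrier \<A>" using b basic_sub by blast
  fix q assume q: "q \<in> N"
  have ptq: "\<exists>M. phi_basic \<A> q M \<and> M \<subseteq> N" if "q = Pt m" for m
    using that q by (intro exI[of _ "{Pt m}"]) (auto simp: phi_basic_def)
  show "\<exists>M. phi_basic \<A> q M \<and> M \<subseteq> N"
    using b unfolding phi_basic_def[of _ p]
  proof (elim disjE exE conjE)
    fix n assume "p = Pt n" "N = {Pt n}" then show ?thesis using ptq q by auto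
  next
    fix a F assume h: "a \<in> \<A>" "p = Ad a" "finite F" "N = {Ad a} \<union> Pt ` (a - F)"
    then show ?thesis using q ptq b by auto
  next
    fix F G assume h: "p = Infty" "finite F" "finite G" "G \<subseteq> \<A>"
        "N = {Infty} \<union> Ad ` (\<A> - G) \<union> Pt ` (UNIV - (F \<union> \<Union> G))"
    consider "q = Infty" | b where "b \<in> \<A> - G" "q = Ad b" | m where "q = Pt m" using q h by auto
    then show ?thesis
    proof cases
      case 1 then show ?thesis using b h by auto
    next
      case 2
      let ?F = "b \<inter> (F \<union> \<Union>G)"
      have "finite (b \<inter> \<Union>G)"
      proof -
        have "b \<inter> \<Union>G = (\<Union>g\<in>G. b \<inter> g)" by auto
        moreover have "\<forall>g\<in>G. finite (b \<inter> g)"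
        proof
          fix g assume "g \<in> G"
          then have "g \<in> \<A>" "g \<noteq> b" using 2 h(4) by auto
          then show "finite (b \<inter> g)" using ad 2 unfolding almost_disjoint_def by blast
        qed
        ultimately show ?thesis using h(3) by (metis finite_UN_I)
      qed
      then have "finite ?F" using h(2) by (simp add: Int_Un_distrib)
      then have "phi_basic \<A> q ({Ad b} \<union> Pt ` (b - ?F))" using 2 unfolding phi_basic_def by auto
      moreover have "{Ad b} \<union> Pt ` (b - ?F) \<subseteq> N" using 2 h by auto
      ultimately show ?thesis by blast
    next
      case 3 then show ?thesis using ptq by blast
    qed
  qed
qed

lemma conv_Phi:
  assumes "l \<in> phi_carrier \<A>" "\<And>N. phi_basic \<A> l N \<Longrightarrow> finite {n \<in> S. x n \<notin> N}"
  shows "conv_on (Phi \<A>) x S l"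
  unfolding conv_on_def topspace_Phi
proof (intro conjI allI impI)
  show "l \<in> phi_carrier \<A>" by fact
  fix U assume "openin (Phi \<A>) U \<and> l \<in> U"
  then obtain N where "phi_basic \<A> l N" "N \<subseteq> U" unfolding openin_Phi by blast
  then show "finite {n \<in> S. x n \<notin> U}"
    using assms(2) by (rule_tac finite_subset[of _ "{n \<in> S. x n \<notin> N}"]) auto
qed

lemma conv_basic:
  assumes "almost_disjoint \<A>" "conv_on (Phi \<A>) x S l" "phi_basic \<A> l N"
  shows "finite {n \<in> S. x n \<notin> N}"
proof -
  have "openin (Phi \<A>) N" "l \<in> N" using basic_open[OF assms(1,3)] basic_mem[OF assms(3)] by auto
  then show ?thesis using assms(2) unfolding conv_on_def by simp
qed

lemma Hausdorff_Phi:
  assumes ad: "almost_disjoint \<A>"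
  shows "Hausdorff_space (Phi \<A>)"
proof -
  have sepPt: "\<exists>M. phi_basic \<A> q M \<and> Pt n \<notin> M" if qq: "q \<in> phi_carrier \<A>" "q \<noteq> Pt n" for q n
  proof -
    consider m where "q = Pt m" | a where "a \<in> \<A>" "q = Ad a" | "q = Infty"
      using qq(1) unfolding phi_carrier_def by blast
    then show ?thesis
    proof cases
      case 1 then show ?thesis using qq by (intro exI[of _ "{Pt m}"]) (auto simp: phi_basic_def)
    next
      case 2 then show ?thesis
        by (intro exI[of _ "{Ad a} \<union> Pt ` (a - {n})"]) (auto simp: phi_basic_def)
    next
      case 3 then show ?thesis using basic_Infty[of "{n}" "{}" \<A>]
        by (intro exI[of _ "{Infty} \<union> Ad ` (\<A> - {}) \<union> Pt ` (UNIV - ({n} \<union> \<Union>{}))"]) auto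
    qed
  qed
  have sep: "\<exists>N M. phi_basic \<A> p N \<and> phi_basic \<A> q M \<and> N \<inter> M = {}"
    if pq: "p \<in> phi_carrier \<A>" "q \<in> phi_carrier \<A>" "p \<noteq> q" for p q
  proof -
    have sym: "\<exists>N M. phi_basic \<A> p N \<and> phi_basic \<A> q M \<and> N \<inter> M = {}"
      if "\<exists>N M. phi_basic \<A> q N \<and> phi_basic \<A> p M \<and> N \<inter> M = {}" for p q
      using that by blast
    have ptcase: "\<exists>N M. phi_basic \<A> (Pt n) N \<and> phi_basic \<A> q M \<and> N \<inter> M = {}"
      if qn: "q \<in> phi_carrier \<A>" "q \<noteq> Pt n" for q n
    proof -
      obtain M where "phi_basic \<A> q M" "Pt n \<notin> M" using sepPt[OF qn] by blast
      moreover have "phi_basic \<A> (Pt n) {Pt n}" by (simp add: phi_basic_def)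
      ultimately show ?thesis by blast
    qed
    have adad: "\<exists>N M. phi_basic \<A> (Ad a) N \<and> phi_basic \<A> (Ad b) M \<and> N \<inter> M = {}"
      if "a \<in> \<A>" "b \<in> \<A>" "a \<noteq> b" for a b
    proof -
      have f: "finite (a \<inter> b)" using ad that unfolding almost_disjoint_def by auto
      have "phi_basic \<A> (Ad a) ({Ad a} \<union> Pt ` (a - (a \<inter> b)))"
        "phi_basic \<A> (Ad b) ({Ad b} \<union> Pt ` (b - (a \<inter> b)))"
        using f that basic_Ad by auto
      moreover have "({Ad a} \<union> Pt ` (a - (a \<inter> b))) \<inter> ({Ad b} \<union> Pt ` (b - (a \<inter> b))) = {}"
        using that by auto
      ultimately show ?thesis by blast
    qed
    have adinf: "\<exists>N M. phi_basic \<A> (Ad a) N \<and> phi_basic \<A> Infty M \<and> N \<inter> M = {}"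
      if "a \<in> \<A>" for a
    proof -
      have "phi_basic \<A> (Ad a) ({Ad a} \<union> Pt ` (a - {}))"
        "phi_basic \<A> Infty ({Infty} \<union> Ad ` (\<A> - {a}) \<union> Pt ` (UNIV - ({} \<union> \<Union>{a})))"
        using that basic_Infty[of "{}" "{a}" \<A>] basic_Ad[of a \<A> "{}"] by auto
      moreover have "({Ad a} \<union> Pt ` (a - {})) \<inter>
          ({Infty} \<union> Ad ` (\<A> - {a}) \<union> Pt ` (UNIV - ({} \<union> \<Union>{a}))) = {}" by auto
      ultimately show ?thesis by blast
    qed
    consider n where "p = Pt n" | n where "q = Pt n" | a b where "p = Ad a" "q = Ad b" "a \<in> \<A>" "b \<in> \<A>"
      | a where "p = Ad a" "q = Infty" "a \<in> \<A>" | a where "q = Ad a" "p = Infty" "a \<in> \<A>"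
      using pq unfolding phi_carrier_def by auto
    then show ?thesis
    proof cases
      case 1 then show ?thesis using ptcase[of q n] pq by simp
    next
      case 2
      then have "\<exists>N M. phi_basic \<A> q N \<and> phi_basic \<A> p M \<and> N \<inter> M = {}"
        using ptcase[of p n] pq by simp
      then obtain N M where "phi_basic \<A> q N" "phi_basic \<A> p M" "N \<inter> M = {}" by blast
      then show ?thesis by (intro exI[of _ M] exI[of _ N]) auto
    next
      case 3 then show ?thesis using adad pq by blast
    next
      case 4 then show ?thesis using adinf by blast
    next
      case 5
      then obtain N M where "phi_basic \<A> q N" "phi_basic \<A> p M" "N \<inter> M = {}"
        using adinf[of a] by auto
      then show ?thesis by (intro exI[of _ M] exI[of _ N]) auto
    qed
  qed
  show ?thesis unfolding Hausdorff_space_def topspace_Phi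
  proof (intro allI impI)
    fix p q assume h: "p \<in> phi_carrier \<A> \<and> q \<in> phi_carrier \<A> \<and> p \<noteq> q"
    then obtain N M where "phi_basic \<A> p N" "phi_basic \<A> q M" "N \<inter> M = {}" using sep by blast
    then show "\<exists>U V. openin (Phi \<A>) U \<and> openin (Phi \<A>) V \<and> p \<in> U \<and> q \<in> V \<and> disjnt U V"
      using basic_open[OF ad] basic_mem by (metis disjnt_def)
  qed
qed

lemma ideal_sub: "is_ideal I \<Longrightarrow> A \<in> I \<Longrightarrow> B \<subseteq> A \<Longrightarrow> B \<in> I"
  unfolding is_ideal_def by blast
lemma ideal_un: "is_ideal I \<Longrightarrow> A \<in> I \<Longrightarrow> B \<in> I \<Longrightarrow> A \<union> B \<in> I"
  unfolding is_ideal_def by blast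
lemma ideal_fin: "is_ideal I \<Longrightarrow> finite F \<Longrightarrow> F \<subseteq> \<Union>I \<Longrightarrow> F \<in> I"
  unfolding is_ideal_def by blast
lemma ideal_empty: "is_ideal I \<Longrightarrow> {} \<in> I"
  using ideal_fin by blast
lemma ideal_UN:
  assumes "is_ideal I" "finite F" "\<And>a. a \<in> F \<Longrightarrow> g a \<in> I"
  shows "(\<Union>a\<in>F. g a) \<in> I"
  using assms(2,3)
proof (induction F rule: finite_induct)
  case empty then show ?case using ideal_empty[OF assms(1)] by simp
next
  case (insert a F) then show ?case using ideal_un[OF assms(1)] by simp
qed

lemma fin_preimage:
  assumes "\<forall>m. finite {n \<in> B. f n = m}" "finite S"
  shows "finite {n \<in> B. f n \<in> S}"
proof -
  have "{n \<in> B. f n \<in> S} = (\<Union>m\<in>S. {n \<in> B. f n = m})" by auto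
  then show ?thesis using assms by simp
qed

lemma dir1:
  assumes ad: "almost_disjoint \<A>" and ideal: "is_ideal I" and fb: "FinBW I (Phi \<A>)"
    and f: "f \<in> D_ideal I"
  shows "\<exists>B. B \<subseteq> \<Union>I \<and> B \<notin> I \<and> (\<forall>n. finite {x \<in> B. f x = n}) \<and> f ` B \<in> Fin2 \<A>"
proof -
  let ?x = "\<lambda>n. Pt (f n)"
  have "\<forall>n\<in>\<Union>I. ?x n \<in> topspace (Phi \<A>)" by (simp add: topspace_Phi phi_carrier_def)
  moreover have "\<forall>x. (\<forall>n\<in>\<Union>I. x n \<in> topspace (Phi \<A>)) \<longrightarrow>
        (\<exists>A. A \<subseteq> \<Union>I \<and> A \<notin> I \<and> (\<exists>l. conv_on (Phi \<A>) x A l))"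
    using fb by (simp add: FinBW_def)
  ultimately have "\<exists>A. A \<subseteq> \<Union>I \<and> A \<notin> I \<and> (\<exists>l. conv_on (Phi \<A>) ?x A l)"
    by (metis (no_types, lifting))
  then obtain S l where S: "S \<subseteq> \<Union>I" "S \<notin> I" "conv_on (Phi \<A>) ?x S l"
    by blast
  have lc: "l \<in> phi_carrier \<A>" using S(3) unfolding conv_on_def topspace_Phi by blast
  have cb: "\<And>N. phi_basic \<A> l N \<Longrightarrow> finite {n\<in>S. ?x n \<notin> N}" using conv_basic[OF ad S(3)] .
  consider m where "l = Pt m" | a where "a \<in> \<A>" "l = Ad a" | "l = Infty"
    using lc unfolding phi_carrier_def by blast
  then show ?thesis
  proof cases
    case 1
    have "finite {n\<in>S. ?x n \<notin> {Pt m}}" using cb[of "{Pt m}"] 1 basic_Pt by simp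
    moreover have "{n\<in>S. ?x n \<notin> {Pt m}} = {n\<in>S. f n \<noteq> m}" by auto
    ultimately have fin: "finite {n\<in>S. f n \<noteq> m}" by simp
    have "{n\<in>\<Union>I. f n = m} \<in> I" using f unfolding D_ideal_def by blast
    moreover have "{n\<in>S. f n \<noteq> m} \<in> I" using fin S(1) ideal_fin[OF ideal] by blast
    ultimately have "{n\<in>\<Union>I. f n = m} \<union> {n\<in>S. f n \<noteq> m} \<in> I" using ideal_un[OF ideal] by blast
    moreover have "S \<subseteq> {n\<in>\<Union>I. f n = m} \<union> {n\<in>S. f n \<noteq> m}" using S(1) by auto
    ultimately have "S \<in> I" using ideal_sub[OF ideal] by blast
    then show ?thesis using S by blast
  next
    case 2
    let ?B = "{n\<in>S. f n \<in> a}"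
    have "phi_basic \<A> l ({Ad a} \<union> Pt ` (a - {}))" using 2 basic_Ad[of a \<A> "{}"] by simp
    moreover have "{n\<in>S. ?x n \<notin> {Ad a} \<union> Pt ` (a - {})} = {n\<in>S. f n \<notin> a}" by auto
    ultimately have "finite {n\<in>S. f n \<notin> a}" using cb by metis
    then have "{n\<in>S. f n \<notin> a} \<in> I" using S(1) ideal_fin[OF ideal] by blast
    then have Bn: "?B \<notin> I"
    proof -
      assume h: "{n\<in>S. f n \<notin> a} \<in> I"
      { assume "?B \<in> I"
        then have "?B \<union> {n\<in>S. f n \<notin> a} \<in> I" using h ideal_un[OF ideal] by blast
        moreover have "S = ?B \<union> {n\<in>S. f n \<notin> a}" by auto
        ultimately have False using S(2) by simp }
      then show ?thesis by blast
    qed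
    have fin: "finite {n \<in> ?B. f n = m}" for m
    proof -
      have "phi_basic \<A> l ({Ad a} \<union> Pt ` (a - {m}))" using 2 basic_Ad[of a \<A> "{m}"] by simp
      then have "finite {n\<in>S. ?x n \<notin> {Ad a} \<union> Pt ` (a - {m})}" using cb by blast
      then show ?thesis by (rule finite_subset[rotated]) auto
    qed
    have "f ` ?B \<in> Fin2 \<A>" unfolding Fin2_def using 2
      by (intro CollectI exI[of _ "{a}"] exI[of _ "{}"]) auto
    then show ?thesis using Bn fin S(1) by (intro exI[of _ ?B]) auto
  next
    case 3
    have fin: "finite {n \<in> S. f n = m}" for m
    proof -
      have "phi_basic \<A> l ({Infty} \<union> Ad ` (\<A> - {}) \<union> Pt ` (UNIV - ({m} \<union> \<Union>{})))"
        using 3 basic_Infty[of "{m}" "{}" \<A>] by simp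
      then have "finite {n\<in>S. ?x n \<notin> {Infty} \<union> Ad ` (\<A> - {}) \<union> Pt ` (UNIV - ({m} \<union> \<Union>{}))}"
        using cb by blast
      then show ?thesis by (rule finite_subset[rotated]) auto
    qed
    have fa: "finite (f ` S \<inter> a)" if a: "a \<in> \<A>" for a
    proof -
      have "phi_basic \<A> l ({Infty} \<union> Ad ` (\<A> - {a}) \<union> Pt ` (UNIV - ({} \<union> \<Union>{a})))"
        using 3 a basic_Infty[of "{}" "{a}" \<A>] by simp
      then have "finite {n\<in>S. ?x n \<notin> {Infty} \<union> Ad ` (\<A> - {a}) \<union> Pt ` (UNIV - ({} \<union> \<Union>{a}))}"
        using cb by blast
      then have "finite (f ` {n\<in>S. ?x n \<notin> {Infty} \<union> Ad ` (\<A> - {a}) \<union> Pt ` (UNIV - ({} \<union> \<Union>{a}))})"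
        by simp
      then show ?thesis by (rule finite_subset[rotated]) auto
    qed
    have "f ` S \<in> Fin2 \<A>" unfolding Fin2_def using fa
      by (intro CollectI exI[of _ "{}"] exI[of _ "f ` S"]) auto
    then show ?thesis using S fin by blast
  qed
qed

lemma dir2:
  assumes ad: "almost_disjoint \<A>" and ideal: "is_ideal I"
    and H: "\<forall>f\<in>D_ideal I. \<exists>B. B \<subseteq> \<Union>I \<and> B \<notin> I \<and>
        (\<forall>n. finite {x \<in> B. f x = n}) \<and> f ` B \<in> Fin2 \<A>"
  shows "FinBW I (Phi \<A>)"
  unfolding FinBW_def
proof (intro conjI allI impI)
  show "Hausdorff_space (Phi \<A>)" using Hausdorff_Phi[OF ad] .
  fix x :: "'a \<Rightarrow> phi_pt"
  assume "\<forall>n\<in>\<Union>I. x n \<in> topspace (Phi \<A>)"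
  then have xc: "\<And>n. n \<in> \<Union>I \<Longrightarrow> x n \<in> phi_carrier \<A>" unfolding topspace_Phi by blast
  show "\<exists>S. S \<subseteq> \<Union>I \<and> S \<notin> I \<and> (\<exists>l. conv_on (Phi \<A>) x S l)"
  proof (cases "\<exists>p. {n\<in>\<Union>I. x n = p} \<notin> I")
    case True
    then obtain p where p: "{n\<in>\<Union>I. x n = p} \<notin> I" by blast
    have "{n\<in>\<Union>I. x n = p} \<noteq> {}"
    proof
      assume e: "{n\<in>\<Union>I. x n = p} = {}"
      show False using p ideal_empty[OF ideal] unfolding e by blast
    qed
    then obtain n0 where "n0 \<in> {n\<in>\<Union>I. x n = p}" by blast
    then have "n0 \<in> \<Union>I" "x n0 = p" by simp_all
    then have pc: "p \<in> phi_carrier \<A>" using xc by blast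
    have "conv_on (Phi \<A>) x {n\<in>\<Union>I. x n = p} p"
    proof (rule conv_Phi[OF pc])
      fix N assume "phi_basic \<A> p N"
      then have "p \<in> N" by (rule basic_mem)
      then have "{n \<in> {n\<in>\<Union>I. x n = p}. x n \<notin> N} = {}" by auto
      then show "finite {n \<in> {n\<in>\<Union>I. x n = p}. x n \<notin> N}" by (simp only: finite.emptyI)
    qed
    moreover have "{n\<in>\<Union>I. x n = p} \<subseteq> \<Union>I" by blast
    ultimately show ?thesis using p by (intro exI[of _ "{n\<in>\<Union>I. x n = p}"] conjI exI[of _ p])
  next
    case False
    then have fibI: "\<And>p. {n\<in>\<Union>I. x n = p} \<in> I" by blast
    define X where "X = \<Union>I"
    have "countable X" using ideal unfolding is_ideal_def X_def by simp
    then have cX: "countable (x ` X)" by simp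
    define f where "f n = (case x n of Pt m \<Rightarrow> m | Ad a \<Rightarrow> to_nat_on (x ` X) (Ad a)
       | Infty \<Rightarrow> to_nat_on (x ` X) Infty)" for n
    have fPt: "x n = Pt m \<Longrightarrow> f n = m" for n m by (simp add: f_def)
    have fnon: "x n \<notin> range Pt \<Longrightarrow> f n = to_nat_on (x ` X) (x n)" for n
      by (cases "x n") (auto simp: f_def)
    have fD: "f \<in> D_ideal I" unfolding D_ideal_def
    proof (intro CollectI allI)
      fix m
      have s1: "{n \<in> \<Union>I. f n = m} \<subseteq> {n\<in>\<Union>I. x n = Pt m} \<union> {n\<in>\<Union>I. x n = from_nat_into (x ` X) m}"
      proof
        fix n assume n: "n \<in> {n \<in> \<Union>I. f n = m}"
        show "n \<in> {n\<in>\<Union>I. x n = Pt m} \<union> {n\<in>\<Union>I. x n = from_nat_into (x ` X) m}"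
        proof (cases "x n \<in> range Pt")
          case True then show ?thesis using n fPt by auto
        next
          case False
          then have "to_nat_on (x ` X) (x n) = m" using n fnon by auto
          moreover have "x n \<in> x ` X" using n X_def by auto
          ultimately have "from_nat_into (x ` X) m = x n" using cX from_nat_into_to_nat_on by metis
          then show ?thesis using n by auto
        qed
      qed
      have s2: "{n\<in>\<Union>I. x n = Pt m} \<union> {n\<in>\<Union>I. x n = from_nat_into (x ` X) m} \<in> I"
        by (rule ideal_un[OF ideal fibI fibI])
      show "{n \<in> \<Union>I. f n = m} \<in> I" by (rule ideal_sub[OF ideal s2 s1])
    qed
    then obtain B where B: "B \<subseteq> \<Union>I" "B \<notin> I" and fin: "\<forall>m. finite {n \<in> B. f n = m}"
      and img: "f ` B \<in> Fin2 \<A>" using H by blast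
    define C1 where "C1 = {n\<in>B. x n \<in> range Pt}"
    define C2 where "C2 = {n\<in>B. x n \<in> Ad ` \<A>}"
    define C3 where "C3 = {n\<in>B. x n = Infty}"
    have "C3 \<subseteq> {n\<in>\<Union>I. x n = Infty}" using B(1) unfolding C3_def by blast
    then have C3: "C3 \<in> I" by (rule ideal_sub[OF ideal fibI])
    have "B \<subseteq> C1 \<union> C2 \<union> C3" unfolding C1_def C2_def C3_def
      using xc B(1) unfolding phi_carrier_def by blast
    then have "C1 \<notin> I \<or> C2 \<notin> I"
    proof -
      assume sub: "B \<subseteq> C1 \<union> C2 \<union> C3"
      { assume "C1 \<in> I" "C2 \<in> I"
        then have "C1 \<union> C2 \<union> C3 \<in> I" using ideal_un[OF ideal ideal_un[OF ideal] C3] by blast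
        then have "B \<in> I" by (rule ideal_sub[OF ideal _ sub])
        then have False using B(2) by blast }
      then show ?thesis by blast
    qed
    then show ?thesis
    proof
      assume C2: "C2 \<notin> I"
      have "conv_on (Phi \<A>) x C2 Infty"
      proof (rule conv_Phi)
        show "Infty \<in> phi_carrier \<A>" by (simp add: phi_carrier_def)
        fix N assume "phi_basic \<A> Infty N"
        from basic_InftyE[OF this] obtain F G where FG0: "finite F" "finite G" "G \<subseteq> \<A>"
          "N = {Infty} \<union> Ad ` (\<A> - G) \<union> Pt ` (UNIV - (F \<union> \<Union>G))"
          by blast
        note FG = FG0(2-4)
        have "{n \<in> C2. x n \<notin> N} \<subseteq> {n\<in>B. f n \<in> (\<lambda>a. to_nat_on (x ` X) (Ad a)) ` G}"
        proof
          fix n assume n: "n \<in> {n \<in> C2. x n \<notin> N}"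
          then obtain a where a: "a \<in> \<A>" "x n = Ad a" unfolding C2_def by blast
          then have "a \<in> G" using n FG(3) by auto
          moreover have "f n = to_nat_on (x ` X) (Ad a)" using fnon[of n] a by auto
          ultimately show "n \<in> {n\<in>B. f n \<in> (\<lambda>a. to_nat_on (x ` X) (Ad a)) ` G}"
            using n unfolding C2_def by auto
        qed
        moreover have "finite {n\<in>B. f n \<in> (\<lambda>a. to_nat_on (x ` X) (Ad a)) ` G}"
          using fin_preimage[OF fin] FG(1) by blast
        ultimately show "finite {n \<in> C2. x n \<notin> N}" using finite_subset by blast
      qed
      moreover have "C2 \<subseteq> \<Union>I" using B(1) unfolding C2_def by auto
      ultimately show ?thesis using C2 by (intro exI[of _ C2] conjI exI[of _ Infty])
    next
      assume C1: "C1 \<notin> I"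
      have xP: "n \<in> C1 \<Longrightarrow> x n = Pt (f n)" for n unfolding C1_def using fPt by auto
      obtain F T where FT: "F \<subseteq> \<A>" "finite F" "\<forall>a\<in>\<A>. finite (T \<inter> a)" "f ` B \<subseteq> \<Union>F \<union> T"
        using img unfolding Fin2_def by blast
      have "C1 \<subseteq> (\<Union>a\<in>F. {n\<in>C1. f n \<in> a}) \<union> {n\<in>C1. f n \<in> T}"
        using FT(4) unfolding C1_def by blast
      then have "(\<exists>a\<in>F. {n\<in>C1. f n \<in> a} \<notin> I) \<or> {n\<in>C1. f n \<in> T} \<notin> I"
      proof -
        assume sub: "C1 \<subseteq> (\<Union>a\<in>F. {n\<in>C1. f n \<in> a}) \<union> {n\<in>C1. f n \<in> T}"
        { assume h1: "\<forall>a\<in>F. {n\<in>C1. f n \<in> a} \<in> I" and h2: "{n\<in>C1. f n \<in> T} \<in> I"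
          have "(\<Union>a\<in>F. {n\<in>C1. f n \<in> a}) \<in> I"
            by (rule ideal_UN[OF ideal FT(2)]) (use h1 in blast)
          then have "(\<Union>a\<in>F. {n\<in>C1. f n \<in> a}) \<union> {n\<in>C1. f n \<in> T} \<in> I"
            using h2 by (rule ideal_un[OF ideal])
          then have "C1 \<in> I" by (rule ideal_sub[OF ideal _ sub])
          then have False using C1 by blast }
        then show ?thesis by blast
      qed
      moreover have C1s: "C1 \<subseteq> \<Union>I" using B(1) unfolding C1_def by auto
      moreover have C1B: "C1 \<subseteq> B" unfolding C1_def by auto
      ultimately show ?thesis
      proof (elim disjE bexE)
        fix a assume a: "a \<in> F" and Ca: "{n\<in>C1. f n \<in> a} \<notin> I"
        have "conv_on (Phi \<A>) x {n\<in>C1. f n \<in> a} (Ad a)"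
        proof (rule conv_Phi)
          show "Ad a \<in> phi_carrier \<A>" using a FT(1) by (auto simp: phi_carrier_def)
          fix N assume "phi_basic \<A> (Ad a) N"
          from basic_AdE[OF this] obtain F' where F': "finite F'" "N = {Ad a} \<union> Pt ` (a - F')"
            by blast
          have "{n \<in> {n\<in>C1. f n \<in> a}. x n \<notin> N} \<subseteq> {n\<in>B. f n \<in> F'}"
            using xP C1B F'(2) by auto
          moreover have "finite {n\<in>B. f n \<in> F'}" using fin_preimage[OF fin F'(1)] .
          ultimately show "finite {n \<in> {n\<in>C1. f n \<in> a}. x n \<notin> N}" using finite_subset by blast
        qed
        then show ?thesis using Ca C1s by (intro exI[of _ "{n\<in>C1. f n \<in> a}"]) auto
      next
        assume CT: "{n\<in>C1. f n \<in> T} \<notin> I"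
        have "conv_on (Phi \<A>) x {n\<in>C1. f n \<in> T} Infty"
        proof (rule conv_Phi)
          show "Infty \<in> phi_carrier \<A>" by (simp add: phi_carrier_def)
          fix N assume "phi_basic \<A> Infty N"
          from basic_InftyE[OF this] obtain F' G where FG: "finite F'" "finite G" "G \<subseteq> \<A>"
            "N = {Infty} \<union> Ad ` (\<A> - G) \<union> Pt ` (UNIV - (F' \<union> \<Union>G))"
            by blast
          have "{n \<in> {n\<in>C1. f n \<in> T}. x n \<notin> N} \<subseteq> {n\<in>B. f n \<in> F' \<union> (\<Union>g\<in>G. T \<inter> g)}"
            using xP C1B FG(4) by auto
          moreover have "finite (F' \<union> (\<Union>g\<in>G. T \<inter> g))"
          proof -
            have fg: "\<And>g. g \<in> G \<Longrightarrow> finite (T \<inter> g)" using FG(3) FT(3) by blast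
            have "finite (\<Union>g\<in>G. T \<inter> g)" using FG(2) fg by (rule finite_UN_I)
            with FG(1) show ?thesis by (rule finite_UnI)
          qed
          ultimately show "finite {n \<in> {n\<in>C1. f n \<in> T}. x n \<notin> N}"
            using fin_preimage[OF fin] finite_subset by blast
        qed
        then show ?thesis using CT C1s by (intro exI[of _ "{n\<in>C1. f n \<in> T}"]) auto
      qed
    qed
  qed
qed

theorem proposition5p2:
  fixes \<A> :: "nat set set" and I :: "'a set set"
  assumes "almost_disjoint \<A>" and "uncountable \<A>" and "is_ideal I"
  shows "FinBW I (Phi \<A>) \<longleftrightarrow>
    (\<forall>f\<in>D_ideal I. \<exists>B. B \<subseteq> \<Union>I \<and> B \<notin> I \<and>
        (\<forall>n. finite {x \<in> B. f x = n}) \<and> f ` B \<in> Fin2 \<A>)"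
  using dir1[OF assms(1,3)] dir2[OF assms(1,3)] by blast

end
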